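(* Let $N\in\mathbb{N}$ and let $\mathbf{X}$ be an $\mathbb{R}^N$-valued Gaussian random vector with zero mean and symmetric positive-definite covariance matrix $\Sigma$. Then for all $\mathbf{j},\mathbf{k}\in\mathbb{N}_0^N$, $$\mathbb{E}[H_{\mathbf{j}}(\mathbf{X};\Sigma)H_{\mathbf{k}}(\mathbf{X};\Sigma)]=\begin{cases}\mathbf{j}!\,\mathbf{k}!\displaystyle\sum_{\substack{\theta\in\mathbb{N}_0^{N\times N}\\ \mathbf{r}(\theta)=\mathbf{j},\ \mathbf{c}(\theta)=\mathbf{k}}}\frac{(\Sigma^{-1})^{\theta}}{\theta!}, & |\mathbf{j}|=|\mathbf{k}|,\\ 0, & |\mathbf{j}|\neq|\mathbf{k}|.\end{cases}$$ In particular, $$\mathbb{E}[H_{\mathbf{j}}^2(\mathbf{X};\Sigma)]=(\mathbf{j}!)^2\sum_{\substack{\theta\in\mathbb{N}_0^{N\times N}\\ \mathbf{r}(\theta)=\mathbf{c}(\theta)=\mathbf{j}}}\frac{(\Sigma^{-1})^{\theta}}{\theta!}.$$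
   Context: For a multi-index $\mathbf{j}\in\mathbb{N}_0^N$: $|\mathbf{j}|=j_1+\dots+j_N$, $\mathbf{j}!=j_1!\cdots j_N!$, $(\partial/\partial\mathbf{x})^{\mathbf{j}}=\partial^{|\mathbf{j}|}/\partial x_1^{j_1}\cdots\partial x_N^{j_N}$. The density of $\mathbf{X}$ is $\phi(\mathbf{x};\Sigma)=(2\pi)^{-N/2}(\det\Sigma)^{-1/2}\exp(-\tfrac12\mathbf{x}^T\Sigma^{-1}\mathbf{x})$, and $H_{\mathbf{j}}(\mathbf{x};\Sigma)=\frac{(-1)^{|\mathbf{j}|}}{\phi(\mathbf{x};\Sigma)}\left(\frac{\partial}{\partial\mathbf{x}}\right)^{\mathbf{j}}\phi(\mathbf{x};\Sigma)$. For an index matrix $\theta=(\theta_{pq})\in\mathbb{N}_0^{N\times N}$: $\mathbf{r}(\theta)=(r_1,\dots,r_N)$ with $r_p=\sum_{q=1}^N\theta_{pq}$ (row sums), $\mathbf{c}(\theta)=(c_1,\dots,c_N)$ with $c_q=\sum_{p=1}^N\theta_{pq}$ (column sums), $\theta!=\prod_{p,q=1}^N\theta_{pq}!$, and $(\Sigma^{-1})^\theta=\prod_{p,q=1}^N\big((\Sigma^{-1})_{pq}\big)^{\theta_{pq}}$, where $(\Sigma^{-1})_{pq}$ is the $(p,q)$ entry of $\Sigma^{-1}$. *)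

theory Defs
  imports "HOL-Probability.Probability"
begin

text \<open>Multi-indices in N_0^N are functions 'n => nat on a finite index type 'n
  (N = CARD('n)); index matrices are functions 'n => 'n => nat.\<close>

definition mi_abs :: "('n::finite \<Rightarrow> nat) \<Rightarrow> nat" where
  "mi_abs j = (\<Sum>i\<in>UNIV. j i)"

definition mi_fact :: "('n::finite \<Rightarrow> nat) \<Rightarrow> real" where
  "mi_fact j = (\<Prod>i\<in>UNIV. fact (j i))"

definition partial_deriv :: "'n::finite \<Rightarrow> (real^'n \<Rightarrow> real) \<Rightarrow> real^'n \<Rightarrow> real" where
  "partial_deriv i f x = deriv (\<lambda>t. f (x + t *\<^sub>R axis i (1::real))) 0"

fun pd_iter :: "nat \<Rightarrow> ('n::finite \<Rightarrow> nat) \<Rightarrow> (real^'n \<Rightarrow> real) \<Rightarrow> real^'n \<Rightarrow> real" where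
  "pd_iter 0 j f = f"
| "pd_iter (Suc m) j f =
     (let i = (SOME i. 0 < j i) in partial_deriv i (pd_iter m (j(i := j i - 1)) f))"

definition mi_deriv :: "('n::finite \<Rightarrow> nat) \<Rightarrow> (real^'n \<Rightarrow> real) \<Rightarrow> real^'n \<Rightarrow> real" where
  "mi_deriv j f = pd_iter (mi_abs j) j f"

definition gauss_density :: "real^'n^'n \<Rightarrow> real^'n \<Rightarrow> real" where
  "gauss_density S x = (2 * pi) powr (- real CARD('n) / 2) * (det S) powr (- 1 / 2)
      * exp (- (1 / 2) * (x \<bullet> (matrix_inv S *v x)))"

definition hermite :: "('n::finite \<Rightarrow> nat) \<Rightarrow> real^'n^'n \<Rightarrow> real^'n \<Rightarrow> real" where
  "hermite j S x = (-1) ^ mi_abs j / gauss_density S x * mi_deriv j (gauss_density S) x"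

definition sym_posdef :: "real^'n^'n \<Rightarrow> bool" where
  "sym_posdef S \<longleftrightarrow> transpose S = S \<and> (\<forall>x. x \<noteq> 0 \<longrightarrow> 0 < x \<bullet> (S *v x))"

definition index_mats :: "('n::finite \<Rightarrow> nat) \<Rightarrow> ('n \<Rightarrow> nat) \<Rightarrow> ('n \<Rightarrow> 'n \<Rightarrow> nat) set" where
  "index_mats j k = {\<theta>. (\<forall>p. (\<Sum>q\<in>UNIV. \<theta> p q) = j p) \<and> (\<forall>q. (\<Sum>p\<in>UNIV. \<theta> p q) = k q)}"

definition mat_fact :: "('n::finite \<Rightarrow> 'n \<Rightarrow> nat) \<Rightarrow> real" where
  "mat_fact \<theta> = (\<Prod>p\<in>UNIV. \<Prod>q\<in>UNIV. fact (\<theta> p q))"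

definition mat_pow :: "real^'n^'n \<Rightarrow> ('n::finite \<Rightarrow> 'n \<Rightarrow> nat) \<Rightarrow> real" where
  "mat_pow A \<theta> = (\<Prod>p\<in>UNIV. \<Prod>q\<in>UNIV. (A $ p $ q) ^ \<theta> p q)"

end

theory Submission
  imports Defs
begin


inductive Poly :: "(real^'n::finite \<Rightarrow> real) \<Rightarrow> bool" where
  Pconst: "Poly (\<lambda>x. c)"
| Pcoord: "Poly (\<lambda>x. x $ a)"
| Padd: "Poly f \<Longrightarrow> Poly g \<Longrightarrow> Poly (\<lambda>x. f x + g x)"
| Pmult: "Poly f \<Longrightarrow> Poly g \<Longrightarrow> Poly (\<lambda>x. f x * g x)"

lemma Poly_sum: "finite A \<Longrightarrow> (\<And>a. a \<in> A \<Longrightarrow> Poly (f a)) \<Longrightarrow> Poly (\<lambda>x. \<Sum>a\<in>A. f a x)"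
  by (induction A rule: finite_induct) (auto intro: Poly.intros)

lemma Poly_diff: "Poly f \<Longrightarrow> Poly g \<Longrightarrow> Poly (\<lambda>x. f x - g x)"
proof -
  assume "Poly f" "Poly g"
  then have "Poly (\<lambda>x. f x + (\<lambda>x. -1) x * g x)" by (intro Poly.intros)
  then show ?thesis by simp
qed

lemma Poly_cmult: "Poly f \<Longrightarrow> Poly (\<lambda>x. c * f x)"
  using Pmult[OF Pconst] by blast

lemma Poly_line_deriv:
  assumes "Poly q"
  shows "\<exists>q'. Poly q' \<and> (\<forall>x t0. ((\<lambda>t. q (x + t *\<^sub>R axis i 1)) has_real_derivative q' (x + t0 *\<^sub>R axis i 1)) (at t0))"
  using assms
proof induction
  case (Pconst c)
  then show ?case by (intro exI[of _ "\<lambda>x. 0"]) (auto intro: Poly.intros)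
next
  case (Pcoord a)
  show ?case
    apply (intro exI[of _ "\<lambda>x. axis i (1::real) $ a"] conjI allI Poly.intros)
    apply (auto intro!: derivative_eq_intros)
    done
next
  case (Padd f g)
  then obtain f' g' where "Poly f'" "Poly g'"
    and f': "\<And>x t0. ((\<lambda>t. f (x + t *\<^sub>R axis i 1)) has_real_derivative f' (x + t0 *\<^sub>R axis i 1)) (at t0)"
    and g': "\<And>x t0. ((\<lambda>t. g (x + t *\<^sub>R axis i 1)) has_real_derivative g' (x + t0 *\<^sub>R axis i 1)) (at t0)"
    by blast
  show ?case
    by (intro exI[of _ "\<lambda>x. f' x + g' x"] conjI allI Poly.intros \<open>Poly f'\<close> \<open>Poly g'\<close>
          DERIV_add f' g')
next
  case (Pmult f g)
  then obtain f' g' where "Poly f'" "Poly g'"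
    and f': "\<And>x t0. ((\<lambda>t. f (x + t *\<^sub>R axis i 1)) has_real_derivative f' (x + t0 *\<^sub>R axis i 1)) (at t0)"
    and g': "\<And>x t0. ((\<lambda>t. g (x + t *\<^sub>R axis i 1)) has_real_derivative g' (x + t0 *\<^sub>R axis i 1)) (at t0)"
    by blast
  show ?case
  proof (intro exI[of _ "\<lambda>x. f' x * g x + f x * g' x"] conjI allI)
    show "Poly (\<lambda>x. f' x * g x + f x * g' x)"
      by (intro Poly.intros \<open>Poly f'\<close> \<open>Poly g'\<close> Pmult.hyps)
    fix x t0
    show "((\<lambda>t. f (x + t *\<^sub>R axis i 1) * g (x + t *\<^sub>R axis i 1)) has_real_derivative
       f' (x + t0 *\<^sub>R axis i 1) * g (x + t0 *\<^sub>R axis i 1) + f (x + t0 *\<^sub>R axis i 1) * g' (x + t0 *\<^sub>R axis i 1)) (at t0)"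
      using DERIV_mult[OF f'[of x t0] g'[of x t0]] by (simp add: algebra_simps)
  qed
qed


lemma pd_unique:
  assumes "((\<lambda>t. h (x + t *\<^sub>R axis i 1)) has_real_derivative D) (at 0)"
  shows "partial_deriv i h x = D"
  unfolding partial_deriv_def using assms by (rule DERIV_imp_deriv)

lemma pd_deriv:
  assumes "Poly q"
  shows "Poly (partial_deriv i q)"
    and "((\<lambda>t. q (x + t *\<^sub>R axis i 1)) has_real_derivative partial_deriv i q (x + u *\<^sub>R axis i 1)) (at u)"
proof -
  obtain q' where q': "Poly q'" "\<And>x u. ((\<lambda>t. q (x + t *\<^sub>R axis i 1)) has_real_derivative q' (x + u *\<^sub>R axis i 1)) (at u)"
    using Poly_line_deriv[OF assms, of i] by blast
  have eq: "partial_deriv i q = q'"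
  proof
    fix x
    show "partial_deriv i q x = q' x"
      using pd_unique[OF q'(2)[of x 0]] by simp
  qed
  show "Poly (partial_deriv i q)" using eq q' by simp
  show "((\<lambda>t. q (x + t *\<^sub>R axis i 1)) has_real_derivative partial_deriv i q (x + u *\<^sub>R axis i 1)) (at u)"
    using eq q' by simp
qed

lemma pd_const: "partial_deriv i (\<lambda>x. c) = (\<lambda>x. 0)"
  by (rule ext, rule pd_unique) simp

lemma pd_coord: "partial_deriv i (\<lambda>x. x $ a) = (\<lambda>x. if a = i then 1 else 0)"
  by (rule ext, rule pd_unique) (auto intro!: derivative_eq_intros simp: axis_def)

lemma pd_add: assumes "Poly f" "Poly g" shows
  "partial_deriv i (\<lambda>x. f x + g x) = (\<lambda>x. partial_deriv i f x + partial_deriv i g x)"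
proof (rule ext, rule pd_unique)
  fix x
  show "((\<lambda>t. f (x + t *\<^sub>R axis i 1) + g (x + t *\<^sub>R axis i 1)) has_real_derivative partial_deriv i f x + partial_deriv i g x) (at 0)"
    using DERIV_add[OF pd_deriv(2)[OF assms(1), where i=i and x=x and u=0] pd_deriv(2)[OF assms(2), where i=i and x=x and u=0]] by simp
qed

lemma pd_mult: assumes "Poly f" "Poly g" shows
  "partial_deriv i (\<lambda>x. f x * g x) = (\<lambda>x. partial_deriv i f x * g x + f x * partial_deriv i g x)"
proof (rule ext, rule pd_unique)
  fix x
  show "((\<lambda>t. f (x + t *\<^sub>R axis i 1) * g (x + t *\<^sub>R axis i 1)) has_real_derivative partial_deriv i f x * g x + f x * partial_deriv i g x) (at 0)"
    using DERIV_mult[OF pd_deriv(2)[OF assms(1), where i=i and x=x and u=0] pd_deriv(2)[OF assms(2), where i=i and x=x and u=0]] by (simp add: algebra_simps)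
qed

lemma pd_cmult: "Poly f \<Longrightarrow> partial_deriv i (\<lambda>x. c * f x) = (\<lambda>x. c * partial_deriv i f x)"
  using pd_mult[OF Pconst, of f i c] by (simp add: pd_const)

lemma pd_diff: assumes "Poly f" "Poly g" shows
  "partial_deriv i (\<lambda>x. f x - g x) = (\<lambda>x. partial_deriv i f x - partial_deriv i g x)"
proof (rule ext, rule pd_unique)
  fix x
  show "((\<lambda>t. f (x + t *\<^sub>R axis i 1) - g (x + t *\<^sub>R axis i 1)) has_real_derivative partial_deriv i f x - partial_deriv i g x) (at 0)"
    using DERIV_diff[OF pd_deriv(2)[OF assms(1), where i=i and x=x and u=0] pd_deriv(2)[OF assms(2), where i=i and x=x and u=0]] by simp
qed

lemma pd_sum: "finite A \<Longrightarrow> (\<And>a. a \<in> A \<Longrightarrow> Poly (f a)) \<Longrightarrow>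
  partial_deriv i (\<lambda>x. \<Sum>a\<in>A. f a x) = (\<lambda>x. \<Sum>a\<in>A. partial_deriv i (f a) x)"
proof (induction A rule: finite_induct)
  case empty
  then show ?case by (simp add: pd_const)
next
  case (insert a A)
  have "partial_deriv i (\<lambda>x. \<Sum>a\<in>insert a A. f a x) = partial_deriv i (\<lambda>x. f a x + (\<Sum>a\<in>A. f a x))"
    using insert by simp
  also have "\<dots> = (\<lambda>x. partial_deriv i (f a) x + partial_deriv i (\<lambda>x. \<Sum>a\<in>A. f a x) x)"
    using insert by (intro pd_add Poly_sum) auto
  finally show ?case using insert by simp
qed

lemma pd_comm:
  assumes "Poly q"
  shows "partial_deriv a (partial_deriv b q) = partial_deriv b (partial_deriv a q)"
  using assms
proof induction
  case (Pconst c)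
  then show ?case by (simp add: pd_const)
next
  case (Pcoord c)
  then show ?case by (simp add: pd_coord pd_const)
next
  case (Padd f g)
  then show ?case by (simp add: pd_add pd_deriv)
next
  case (Pmult f g)
  have *: "Poly (partial_deriv i f)" "Poly (partial_deriv i g)" for i
    using Pmult by (auto intro: pd_deriv)
  show ?case
    using Pmult * by (simp add: pd_mult pd_add Poly.intros algebra_simps)
qed


definition yv :: "real^'n^'n \<Rightarrow> 'n \<Rightarrow> real^'n \<Rightarrow> real" where
  "yv P l x = (P *v x) $ l"

definition quad :: "real^'n^'n \<Rightarrow> real^'n \<Rightarrow> real" where
  "quad P x = x \<bullet> (P *v x)"

lemma yv_eq: "yv P l = (\<lambda>x. \<Sum>m\<in>UNIV. P$l$m * x$m)"
  by (auto simp: yv_def matrix_vector_mult_def)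

lemma Poly_yv: "Poly (yv P l)"
  unfolding yv_eq by (intro Poly_sum Poly_cmult Pcoord) auto

lemma pd_yv: "partial_deriv i (yv P l) = (\<lambda>x. P$l$i)"
proof -
  have *: "partial_deriv i (\<lambda>x. P$l$a * x$a) = (\<lambda>x. P$l$a * (if a = i then 1 else 0))" for a
    by (simp add: pd_cmult Pcoord pd_coord)
  show ?thesis unfolding yv_eq
    by (subst pd_sum) (auto intro!: Poly_cmult Pcoord simp: * if_distrib cong: if_cong)
qed

lemma quad_eq: "quad P = (\<lambda>x. \<Sum>a\<in>UNIV. x$a * yv P a x)"
  by (auto simp: quad_def yv_def inner_vec_def)

lemma Poly_quad: "Poly (quad P)"
  unfolding quad_eq by (intro Poly_sum Pmult Pcoord Poly_yv) auto

lemma pd_quad: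
  assumes "transpose P = P"
  shows "partial_deriv i (quad P) = (\<lambda>x. 2 * yv P i x)"
proof -
  have sym: "P$a$b = P$b$a" for a b
    using assms by (metis transpose_def vec_lambda_beta)
  have "partial_deriv i (quad P) = (\<lambda>x. \<Sum>a\<in>UNIV. (if a = i then 1 else 0) * yv P a x + x$a * P$a$i)"
  proof -
    have *: "partial_deriv i (\<lambda>x. x $ a * yv P a x) = (\<lambda>x. (if a = i then 1 else 0) * yv P a x + x$a * P$a$i)" for a
      by (simp add: pd_mult Pcoord Poly_yv pd_coord pd_yv)
    show ?thesis unfolding quad_eq
      by (subst pd_sum) (auto intro!: Pmult Pcoord Poly_yv simp: *)
  qed
  also have "\<dots> = (\<lambda>x. yv P i x + (\<Sum>a\<in>UNIV. P$i$a * x$a))"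
  proof -
    have *: "(if a = i then 1 else 0) * b = (if a = i then b else (0::real))"
       "b * (if a = i then 1 else 0) = (if a = i then b else (0::real))" for a b by simp_all
    show ?thesis by (simp add: sum.distrib * sym mult.commute)
  qed
  also have "\<dots> = (\<lambda>x. 2 * yv P i x)"
    by (auto simp: yv_eq)
  finally show ?thesis .
qed

definition gc :: "real^'n^'n \<Rightarrow> real" where
  "gc S = (2 * pi) powr (- real CARD('n) / 2) * (det S) powr (- 1 / 2)"

lemma gauss_eq: "gauss_density S = (\<lambda>x. gc S * exp (-(1/2) * quad (matrix_inv S) x))"
  by (auto simp: gauss_density_def gc_def quad_def)

lemma gauss_line_deriv:
  assumes "transpose (matrix_inv S) = matrix_inv S"
  shows "((\<lambda>t. gauss_density S (x + t *\<^sub>R axis i 1)) has_real_derivative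
     (- yv (matrix_inv S) i (x + u *\<^sub>R axis i 1) * gauss_density S (x + u *\<^sub>R axis i 1))) (at u)"
proof -
  let ?P = "matrix_inv S"
  let ?z = "x + u *\<^sub>R axis i 1"
  have hQ: "((\<lambda>t. quad ?P (x + t *\<^sub>R axis i 1)) has_real_derivative 2 * yv ?P i ?z) (at u)"
    using pd_deriv(2)[OF Poly_quad[of "matrix_inv S"], where i=i and x=x and u=u] pd_quad[OF assms] by simp
  have "((\<lambda>t. gc S * exp (-(1/2) * quad ?P (x + t *\<^sub>R axis i 1))) has_real_derivative
     gc S * (exp (-(1/2) * quad ?P ?z) * (-(1/2) * (2 * yv ?P i ?z)))) (at u)"
    by (intro DERIV_cmult DERIV_exp[THEN DERIV_chain2] DERIV_cmult hQ)
  then show ?thesis by (simp add: gauss_eq algebra_simps)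
qed

lemma qphi_line_deriv:
  assumes "transpose (matrix_inv S) = matrix_inv S" "Poly q"
  shows "((\<lambda>t. q (x + t *\<^sub>R axis i 1) * gauss_density S (x + t *\<^sub>R axis i 1)) has_real_derivative
     (partial_deriv i q (x + u *\<^sub>R axis i 1) - yv (matrix_inv S) i (x + u *\<^sub>R axis i 1) * q (x + u *\<^sub>R axis i 1))
       * gauss_density S (x + u *\<^sub>R axis i 1)) (at u)"
  using DERIV_mult[OF pd_deriv(2)[OF assms(2), where i=i and x=x and u=u] gauss_line_deriv[OF assms(1), where i=i and x=x and u=u]]
  by (simp add: algebra_simps)

lemma pd_qphi:
  assumes "transpose (matrix_inv S) = matrix_inv S" "Poly q"
  shows "partial_deriv i (\<lambda>x. q x * gauss_density S x) =
     (\<lambda>x. (partial_deriv i q x - yv (matrix_inv S) i x * q x) * gauss_density S x)"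
  by (rule ext, rule pd_unique) (use qphi_line_deriv[OF assms, where u=0] in simp)


lemma mi_abs_upd: "mi_abs (j(i := v)) + j i = mi_abs j + (v::nat)"
proof -
  have "mi_abs (j(i := v)) = v + (\<Sum>p\<in>UNIV - {i}. j p)"
    unfolding mi_abs_def by (subst sum.remove[of _ i]) (auto intro!: sum.cong)
  moreover have "mi_abs j = j i + (\<Sum>p\<in>UNIV - {i}. j p)"
    unfolding mi_abs_def by (subst sum.remove[of _ i]) auto
  ultimately show ?thesis by simp
qed

lemma mi_abs_dec: "0 < j i \<Longrightarrow> mi_abs (j(i := j i - 1)) = mi_abs j - 1"
  using mi_abs_upd[of j i "j i - 1"] by simp

lemma mi_abs_zero: "mi_abs j = 0 \<longleftrightarrow> j = (\<lambda>_. 0)"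
  by (auto simp: mi_abs_def)

lemma mi_abs_pos: "0 < mi_abs j \<Longrightarrow> \<exists>i. 0 < j i"
  by (metis mi_abs_zero neq0_conv)

lemma mi_abs_pos_i: "0 < j i \<Longrightarrow> 0 < mi_abs j"
  using mi_abs_upd[of j i 0] by simp

definition RR :: "real^'n^'n \<Rightarrow> 'n \<Rightarrow> (real^'n \<Rightarrow> real) \<Rightarrow> real^'n \<Rightarrow> real" where
  "RR P i q = (\<lambda>x. yv P i x * q x - partial_deriv i q x)"

lemma Poly_RR: "Poly q \<Longrightarrow> Poly (RR P i q)"
  unfolding RR_def by (intro Poly_diff Pmult Poly_yv pd_deriv)

lemma pd_RR: "Poly q \<Longrightarrow> partial_deriv a (RR P i q) =
   (\<lambda>x. P$i$a * q x + yv P i x * partial_deriv a q x - partial_deriv a (partial_deriv i q) x)"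
  unfolding RR_def by (simp add: pd_diff pd_mult Pmult Poly_yv pd_deriv pd_yv)

lemma RR_comm:
  assumes sym: "transpose P = P" and q: "Poly q"
  shows "RR P a (RR P b q) = RR P b (RR P a q)"
proof -
  have s: "P$a$b = P$b$a" using sym by (metis transpose_def vec_lambda_beta)
  have e1: "RR P a (RR P b q) = (\<lambda>x. yv P a x * RR P b q x - partial_deriv a (RR P b q) x)"
    by (simp add: RR_def[of P a])
  have e2: "RR P b (RR P a q) = (\<lambda>x. yv P b x * RR P a q x - partial_deriv b (RR P a q) x)"
    by (simp add: RR_def[of P b])
  show ?thesis
    unfolding e1 e2 pd_RR[OF q]
    by (simp add: RR_def pd_comm[OF q] s algebra_simps)
qed

locale gs =
  fixes S :: "real^'n::finite^'n"
  assumes symP: "transpose (matrix_inv S) = matrix_inv S"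
    and gc0: "gc S \<noteq> 0"
begin

lemma gpos: "gauss_density S x \<noteq> 0"
  using gc0 by (simp add: gauss_eq)

lemma herm_struct:
  "\<forall>j. mi_abs j = m \<longrightarrow> Poly (hermite j S) \<and>
     pd_iter m j (gauss_density S) = (\<lambda>x. (-1)^m * hermite j S x * gauss_density S x) \<and>
     (0 < m \<longrightarrow> hermite j S = RR (matrix_inv S) (SOME i. 0 < j i) (hermite (j((SOME i. 0 < j i) := j (SOME i. 0 < j i) - 1)) S))"
proof (induction m)
  case 0
  show ?case
  proof (intro allI impI conjI)
    fix j :: "'n \<Rightarrow> nat" assume j: "mi_abs j = 0"
    have h: "hermite j S = (\<lambda>x. 1)"
      using j gpos by (auto simp: hermite_def mi_deriv_def)
    show "Poly (hermite j S)" unfolding h by (rule Pconst)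
    show "pd_iter 0 j (gauss_density S) = (\<lambda>x. (- 1) ^ 0 * hermite j S x * gauss_density S x)"
      using h by simp
  qed simp
next
  case (Suc m)
  show ?case
  proof (intro allI impI)
    fix j :: "'n \<Rightarrow> nat" assume j: "mi_abs j = Suc m"
    define i where "i = (SOME i. 0 < j i)"
    have ji: "0 < j i" unfolding i_def using mi_abs_pos[of j] j by (metis someI_ex zero_less_Suc)
    define j' where "j' = j(i := j i - 1)"
    have j': "mi_abs j' = m" unfolding j'_def using mi_abs_dec[of j i, OF ji] j by simp
    define H where "H = hermite j' S"
    have HP: "Poly H" and IH: "pd_iter m j' (gauss_density S) = (\<lambda>x. (-1)^m * H x * gauss_density S x)"
      using Suc j' unfolding H_def by auto
    have HP': "Poly (\<lambda>x. (-1)^m * H x)" by (intro Poly_cmult HP)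
    have "pd_iter (Suc m) j (gauss_density S) = partial_deriv i (pd_iter m j' (gauss_density S))"
      by (simp add: i_def j'_def Let_def)
    also have "\<dots> = partial_deriv i (\<lambda>x. (-1)^m * H x * gauss_density S x)"
      by (simp only: IH)
    also have "\<dots> = (\<lambda>x. (partial_deriv i (\<lambda>x. (-1)^m * H x) x - yv (matrix_inv S) i x * ((-1)^m * H x)) * gauss_density S x)"
      using pd_qphi[OF symP HP'] by simp
    also have "\<dots> = (\<lambda>x. (-1)^Suc m * RR (matrix_inv S) i H x * gauss_density S x)"
      unfolding pd_cmult[OF HP] RR_def by (simp add: algebra_simps)
    finally have D: "pd_iter (Suc m) j (gauss_density S) = (\<lambda>x. (-1)^Suc m * RR (matrix_inv S) i H x * gauss_density S x)" .
    have HJ: "hermite j S = RR (matrix_inv S) i H"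
    proof
      fix x
      show "hermite j S x = RR (matrix_inv S) i H x"
        unfolding hermite_def mi_deriv_def j D using gpos[of x]
        by (simp add: field_simps)
    qed
    show "Poly (hermite j S) \<and>
         pd_iter (Suc m) j (gauss_density S) = (\<lambda>x. (- 1) ^ Suc m * hermite j S x * gauss_density S x) \<and>
         (0 < Suc m \<longrightarrow> hermite j S = RR (matrix_inv S) (SOME i. 0 < j i) (hermite (j((SOME i. 0 < j i) := j (SOME i. 0 < j i) - 1)) S))"
      using HJ D HP by (simp add: Poly_RR H_def j'_def i_def[symmetric])
  qed
qed

lemma Poly_herm: "Poly (hermite j S)"
  using herm_struct[of "mi_abs j"] by blast

lemma herm0: "hermite (\<lambda>_. 0) S = (\<lambda>x. 1)"
  using gpos by (auto simp: hermite_def mi_deriv_def mi_abs_def)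

lemma herm_rec: "0 < j i \<Longrightarrow> hermite j S = RR (matrix_inv S) i (hermite (j(i := j i - 1)) S)"
proof (induction "mi_abs j" arbitrary: j i rule: less_induct)
  case less
  define i0 where "i0 = (SOME i. 0 < j i)"
  have pos: "0 < mi_abs j" using mi_abs_pos_i[of j i, OF less.prems] .
  have ji0: "0 < j i0" unfolding i0_def using less.prems by (metis someI_ex)
  have H0: "hermite j S = RR (matrix_inv S) i0 (hermite (j(i0 := j i0 - 1)) S)"
    using herm_struct[of "mi_abs j"] pos unfolding i0_def by blast
  show ?case
  proof (cases "i = i0")
    case True
    then show ?thesis using H0 by simp
  next
    case False
    define j0 where "j0 = j(i0 := j i0 - 1)"
    define j1 where "j1 = j(i := j i - 1)"
    have a: "mi_abs j0 < mi_abs j" unfolding j0_def using mi_abs_dec[of j i0, OF ji0] pos by simp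
    have b: "mi_abs j1 < mi_abs j" unfolding j1_def using mi_abs_dec[of j i, OF less.prems] pos by simp
    have j0i: "0 < j0 i" using False less.prems unfolding j0_def by simp
    have j1i0: "0 < j1 i0" using False ji0 unfolding j1_def by simp
    have e: "j0(i := j0 i - 1) = j1(i0 := j1 i0 - 1)"
      unfolding j0_def j1_def using False by (auto simp: fun_eq_iff)
    have h0: "hermite j0 S = RR (matrix_inv S) i (hermite (j0(i := j0 i - 1)) S)"
      using less.hyps[OF a j0i] .
    have "hermite j S = RR (matrix_inv S) i0 (hermite j0 S)"
      unfolding j0_def by (rule H0)
    also have "\<dots> = RR (matrix_inv S) i0 (RR (matrix_inv S) i (hermite (j0(i := j0 i - 1)) S))"
      by (simp only: h0)
    also have "\<dots> = RR (matrix_inv S) i (RR (matrix_inv S) i0 (hermite (j1(i0 := j1 i0 - 1)) S))"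
      by (simp only: e RR_comm[OF symP Poly_herm])
    also have "\<dots> = RR (matrix_inv S) i (hermite j1 S)"
      using less.hyps[OF b j1i0] by (simp only:)
    finally show ?thesis unfolding j1_def .
  qed
qed

end


context gs begin

lemma appell:
  "partial_deriv i (hermite k S) =
     (\<lambda>x. \<Sum>l\<in>UNIV. matrix_inv S $ i $ l * real (k l) * hermite (k(l := k l - 1)) S x)"
proof (induction "mi_abs k" arbitrary: k i rule: less_induct)
  case less
  let ?P = "matrix_inv S"
  have s: "?P$a$b = ?P$b$a" for a b using symP by (metis transpose_def vec_lambda_beta)
  show ?case
  proof (cases "mi_abs k = 0")
    case True
    then have k: "k = (\<lambda>_. 0)" by (simp add: mi_abs_zero)
    show ?thesis unfolding k herm0 by (simp add: pd_const)
  next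
    case False
    then obtain a where ka: "0 < k a" using mi_abs_pos by blast
    define k' where "k' = k(a := k a - 1)"
    have lt: "mi_abs k' < mi_abs k" unfolding k'_def using mi_abs_dec[of k a, OF ka] False by simp
    define H' where "H' = hermite k' S"
    have HP: "Poly H'" unfolding H'_def by (rule Poly_herm)
    have HK: "hermite k S = RR ?P a H'"
      unfolding H'_def k'_def by (rule herm_rec[of k a, OF ka])
    have IH: "partial_deriv j H' = (\<lambda>x. \<Sum>l\<in>UNIV. ?P $ j $ l * real (k' l) * hermite (k'(l := k' l - 1)) S x)" for j
      unfolding H'_def using less.hyps[OF lt] by blast
    have D2: "partial_deriv a (partial_deriv i H') =
       (\<lambda>x. \<Sum>l\<in>UNIV. ?P $ i $ l * real (k' l) * partial_deriv a (hermite (k'(l := k' l - 1)) S) x)"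
      unfolding IH[of i]
      by (subst pd_sum) (auto intro!: Poly_cmult Poly_herm simp: pd_cmult[OF Poly_herm])
    have trm: "real (k' l) * RR ?P a (hermite (k'(l := k' l - 1)) S) x =
        real (k' l) * hermite (k(l := k l - 1)) S x" for l x
    proof (cases "k' l = 0")
      case True then show ?thesis by simp
    next
      case False
      have pos: "0 < (k(l := k l - 1)) a" using False ka unfolding k'_def by (cases "l = a") auto
      have e: "(k(l := k l - 1))(a := (k(l := k l - 1)) a - 1) = k'(l := k' l - 1)"
        unfolding k'_def by (auto simp: fun_eq_iff)
      show ?thesis using herm_rec[of "k(l := k l - 1)" a, OF pos] e by simp
    qed
    have "partial_deriv i (hermite k S) =
      (\<lambda>x. ?P$a$i * H' x + yv ?P a x * partial_deriv i H' x - partial_deriv a (partial_deriv i H') x)"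
      unfolding HK pd_RR[OF HP] pd_comm[OF HP] ..
    also have "\<dots> = (\<lambda>x. ?P$a$i * H' x + (\<Sum>l\<in>UNIV. ?P $ i $ l * (real (k' l) * RR ?P a (hermite (k'(l := k' l - 1)) S) x)))"
      unfolding D2 unfolding IH[of i] RR_def
      by (simp add: sum_distrib_left sum_subtractf algebra_simps)
    also have "\<dots> = (\<lambda>x. ?P$a$i * H' x + (\<Sum>l\<in>UNIV. ?P $ i $ l * (real (k' l) * hermite (k(l := k l - 1)) S x)))"
      by (simp only: trm)
    also have "\<dots> = (\<lambda>x. \<Sum>l\<in>UNIV. ?P $ i $ l * real (k l) * hermite (k(l := k l - 1)) S x)"
    proof
      fix x
      have kl: "real (k l) = real (k' l) + (if l = a then 1 else 0)" for l
        unfolding k'_def using ka by auto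
      have "(\<Sum>l\<in>UNIV. ?P $ i $ l * real (k l) * hermite (k(l := k l - 1)) S x)
         = (\<Sum>l\<in>UNIV. ?P $ i $ l * (real (k' l) * hermite (k(l := k l - 1)) S x))
           + (\<Sum>l\<in>UNIV. (if l = a then ?P $ i $ l * hermite (k(l := k l - 1)) S x else 0))"
      proof -
        have "?P $ i $ l * real (k l) * hermite (k(l := k l - 1)) S x =
          ?P $ i $ l * (real (k' l) * hermite (k(l := k l - 1)) S x) +
          (if l = a then ?P $ i $ l * hermite (k(l := k l - 1)) S x else 0)" for l
          unfolding kl by (cases "l = a") (simp_all add: algebra_simps)
        then show ?thesis by (simp add: sum.distrib)
      qed
      also have "(\<Sum>l\<in>UNIV. (if l = a then ?P $ i $ l * hermite (k(l := k l - 1)) S x else 0)) = ?P$a$i * H' x"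
        by (simp add: s H'_def k'_def)
      finally show "?P$a$i * H' x + (\<Sum>l\<in>UNIV. ?P $ i $ l * (real (k' l) * hermite (k(l := k l - 1)) S x))
          = (\<Sum>l\<in>UNIV. ?P $ i $ l * real (k l) * hermite (k(l := k l - 1)) S x)" by linarith
    qed
    finally show ?thesis .
  qed
qed

end


lemma Poly_cont: "Poly q \<Longrightarrow> continuous_on UNIV q"
  by (induction rule: Poly.induct) (auto intro!: continuous_intros)

lemma Poly_meas: "Poly q \<Longrightarrow> q \<in> borel_measurable borel"
  by (rule borel_measurable_continuous_onI, erule Poly_cont)

lemma Poly_bound: "Poly q \<Longrightarrow> \<exists>C d. 0 \<le> C \<and> (\<forall>x. \<bar>q x\<bar> \<le> C * (1 + norm x) ^ d)"
proof (induction rule: Poly.induct)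
  case (Pconst c)
  show ?case by (intro exI[of _ "\<bar>c\<bar>"] exI[of _ 0]) auto
next
  case (Pcoord a)
  show ?case
  proof (intro exI[of _ 1] exI[of _ 1] conjI allI)
    fix x :: "real^'a"
    show "\<bar>x $ a\<bar> \<le> 1 * (1 + norm x) ^ 1" using component_le_norm_cart[of x a] by simp
  qed simp
next
  case (Padd f g)
  then obtain C1 d1 C2 d2 where c: "0 \<le> C1" "0 \<le> C2"
    and b1: "\<And>x. \<bar>f x\<bar> \<le> C1 * (1 + norm x) ^ d1" and b2: "\<And>x. \<bar>g x\<bar> \<le> C2 * (1 + norm x) ^ d2"
    by blast
  show ?case
  proof (intro exI[of _ "C1 + C2"] exI[of _ "d1 + d2"] conjI allI)
    fix x :: "real^'a"
    have p1: "(1 + norm x) ^ d1 \<le> (1 + norm x) ^ (d1 + d2)" by (rule power_increasing) auto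
    have p2: "(1 + norm x) ^ d2 \<le> (1 + norm x) ^ (d1 + d2)" by (rule power_increasing) auto
    have "\<bar>f x + g x\<bar> \<le> C1 * (1 + norm x) ^ d1 + C2 * (1 + norm x) ^ d2"
      using b1[of x] b2[of x] by linarith
    also have "\<dots> \<le> C1 * (1 + norm x) ^ (d1 + d2) + C2 * (1 + norm x) ^ (d1 + d2)"
      using p1 p2 c by (intro add_mono mult_left_mono) auto
    finally show "\<bar>f x + g x\<bar> \<le> (C1 + C2) * (1 + norm x) ^ (d1 + d2)" by (simp add: algebra_simps)
  qed (use c in simp)
next
  case (Pmult f g)
  then obtain C1 d1 C2 d2 where c: "0 \<le> C1" "0 \<le> C2"
    and b1: "\<And>x. \<bar>f x\<bar> \<le> C1 * (1 + norm x) ^ d1" and b2: "\<And>x. \<bar>g x\<bar> \<le> C2 * (1 + norm x) ^ d2"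
    by blast
  show ?case
  proof (intro exI[of _ "C1 * C2"] exI[of _ "d1 + d2"] conjI allI)
    fix x :: "real^'a"
    have "\<bar>f x * g x\<bar> \<le> (C1 * (1 + norm x) ^ d1) * (C2 * (1 + norm x) ^ d2)"
      unfolding abs_mult using b1[of x] b2[of x] by (intro mult_mono) auto
    then show "\<bar>f x * g x\<bar> \<le> (C1 * C2) * (1 + norm x) ^ (d1 + d2)" by (simp add: algebra_simps power_add)
  qed (use c in simp)
qed

lemma quad_scale: "quad P (c *\<^sub>R x) = c^2 * quad P x"
  by (simp add: quad_def matrix_vector_mult_scaleR power2_eq_square)

lemma integrable_scale:
  fixes f :: "real^'n \<Rightarrow> real"
  assumes f: "integrable lborel f" "f \<in> borel_measurable borel" and c: "c \<noteq> 0"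
  shows "integrable lborel (\<lambda>x. f (c *\<^sub>R x))"
proof -
  have eq: "(lborel :: (real^'n) measure) = density (distr lborel borel (\<lambda>x. c *\<^sub>R x)) (\<lambda>_. ennreal (\<bar>c\<bar>^CARD('n)))"
    using lborel_affine[OF c, where t = "0::real^'n"] by simp
  have "integrable (density (distr lborel borel (\<lambda>x. c *\<^sub>R x)) (\<lambda>_. ennreal (\<bar>c\<bar>^CARD('n)))) f"
    using f(1) eq by simp
  then have "integrable (distr lborel borel (\<lambda>x. c *\<^sub>R x)) (\<lambda>x. \<bar>c\<bar>^CARD('n) *\<^sub>R f x)"
    by (subst (asm) integrable_density) (use f(2) in auto)
  then have "integrable lborel (\<lambda>x. \<bar>c\<bar>^CARD('n) *\<^sub>R f (c *\<^sub>R x))"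
    by (subst (asm) integrable_distr_eq) (use f(2) in auto)
  then have "integrable lborel (\<lambda>x. (1 / \<bar>c\<bar>^CARD('n)) * (\<bar>c\<bar>^CARD('n) * f (c *\<^sub>R x)))"
    by (intro integrable_mult_right) simp
  then show ?thesis using c by simp
qed

locale gs2 = gs S for S :: "real^'n::finite^'n" +
  assumes pdP: "\<And>x. x \<noteq> 0 \<Longrightarrow> 0 < quad (matrix_inv S) x"
    and intg: "integrable lborel (gauss_density S)"
begin

lemma quad_lower: "\<exists>lam>0. \<forall>x. lam * (norm x)^2 \<le> quad (matrix_inv S) x"
proof -
  let ?Q = "quad (matrix_inv S)"
  have ne: "sphere (0::real^'n) 1 \<noteq> {}"
    using norm_axis_1[of "undefined::'n"] by (metis empty_iff mem_sphere_0)
  obtain u where u: "u \<in> sphere 0 1" and umin: "\<And>y. y \<in> sphere 0 1 \<Longrightarrow> ?Q u \<le> ?Q y"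
    using continuous_attains_inf[OF compact_sphere ne, of ?Q]
      continuous_on_subset[OF Poly_cont[OF Poly_quad]] by blast
  have "u \<noteq> 0" using u by auto
  then have pos: "0 < ?Q u" by (rule pdP)
  show ?thesis
  proof (intro exI[of _ "?Q u"] conjI allI pos)
    fix x :: "real^'n"
    show "?Q u * (norm x)^2 \<le> ?Q x"
    proof (cases "x = 0")
      case True then show ?thesis by (simp add: quad_def)
    next
      case False
      have "?Q u \<le> ?Q (inverse (norm x) *\<^sub>R x)" using False by (intro umin) auto
      also have "\<dots> = (inverse (norm x))^2 * ?Q x" by (rule quad_scale)
      finally show ?thesis using False by (simp add: field_simps)
    qed
  qed
qed

lemma gauss_meas: "gauss_density S \<in> borel_measurable borel"
  unfolding gauss_eq
  by (intro borel_measurable_continuous_onI continuous_intros Poly_cont[OF Poly_quad])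

lemma integrable_g4: "integrable lborel (\<lambda>x. exp (-(1/4) * quad (matrix_inv S) x))"
proof -
  have m: "(\<lambda>x. exp (-(1/2) * quad (matrix_inv S) x)) \<in> borel_measurable borel"
    by (intro borel_measurable_continuous_onI continuous_intros Poly_cont[OF Poly_quad])
  have "integrable lborel (\<lambda>x. (1 / gc S) * gauss_density S x)"
    using intg by (rule integrable_mult_right)
  then have i2: "integrable lborel (\<lambda>x. exp (-(1/2) * quad (matrix_inv S) x))"
    using gc0 by (simp add: gauss_eq)
  have "integrable lborel (\<lambda>x. exp (-(1/2) * quad (matrix_inv S) ((1 / sqrt 2) *\<^sub>R x)))"
    by (rule integrable_scale[OF i2 m]) simp
  then show ?thesis by (simp add: quad_scale power_divide)
qed

lemma integrable_poly:
  assumes q: "Poly q"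
  shows "integrable lborel (\<lambda>x. q x * gauss_density S x)"
proof -
  let ?Q = "quad (matrix_inv S)"
  obtain C d where C: "0 \<le> C" and b: "\<And>x. \<bar>q x\<bar> \<le> C * (1 + norm x) ^ d"
    using Poly_bound[OF q] by blast
  obtain lam where lam: "lam > 0" "\<And>x. lam * (norm x)^2 \<le> ?Q x"
    using quad_lower by blast
  define K where "K = C * \<bar>gc S\<bar> * exp ((real d)^2 / lam)"
  show ?thesis
  proof (rule Bochner_Integration.integrable_bound)
    show "integrable lborel (\<lambda>x. K * exp (-(1/4) * ?Q x))"
      by (intro integrable_mult_right integrable_g4)
    show "(\<lambda>x. q x * gauss_density S x) \<in> borel_measurable lborel"
      using Poly_meas[OF q] gauss_meas by measurable
    show "AE x in lborel. norm (q x * gauss_density S x) \<le> norm (K * exp (-(1/4) * ?Q x))"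
    proof (rule AE_I2)
      fix x :: "real^'n"
      let ?r = "norm x"
      have r0: "0 \<le> ?r" by simp
      have e1: "(1 + ?r) ^ d \<le> exp (real d * ?r)"
      proof -
        have "(1 + ?r) ^ d \<le> (exp ?r) ^ d"
          by (intro power_mono) (auto simp: add.commute exp_ge_add_one_self)
        then show ?thesis by (simp add: exp_of_nat_mult)
      qed
      have e2: "real d * ?r - lam * ?r^2 / 4 \<le> (real d)^2 / lam"
      proof -
        have "0 \<le> (real d - lam * ?r / 2)^2" by simp
        then have "0 \<le> (real d)^2 - real d * lam * ?r + lam^2 * ?r^2 / 4"
          by (simp add: power2_eq_square algebra_simps)
        then have "0 \<le> ((real d)^2 - real d * lam * ?r + lam^2 * ?r^2 / 4) / lam"
          using lam by simp
        then show ?thesis using lam by (simp add: field_simps power2_eq_square)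
      qed
      have e3: "real d * ?r - (1/4) * ?Q x \<le> (real d)^2 / lam"
        using e2 lam(2)[of x] by linarith
      have "\<bar>q x * gauss_density S x\<bar> = \<bar>q x\<bar> * (\<bar>gc S\<bar> * exp (-(1/2) * ?Q x))"
        by (simp add: gauss_eq abs_mult)
      also have "\<dots> \<le> (C * exp (real d * ?r)) * (\<bar>gc S\<bar> * exp (-(1/2) * ?Q x))"
        using b[of x] e1 C by (intro mult_right_mono order.trans[OF b[of x]] mult_left_mono) auto
      also have "\<dots> = C * \<bar>gc S\<bar> * exp (real d * ?r - (1/4) * ?Q x) * exp (-(1/4) * ?Q x)"
        by (simp add: exp_add[symmetric] algebra_simps)
      also have "\<dots> \<le> C * \<bar>gc S\<bar> * exp ((real d)^2 / lam) * exp (-(1/4) * ?Q x)"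
        using e3 C by (intro mult_right_mono mult_left_mono) auto
      finally show "norm (q x * gauss_density S x) \<le> norm (K * exp (-(1/4) * ?Q x))"
        using C by (simp add: K_def abs_mult)
    qed
  qed
qed

end


lemma nn_transl:
  fixes g :: "real^'n \<Rightarrow> ennreal"
  assumes "g \<in> borel_measurable borel"
  shows "(\<integral>\<^sup>+x. g (x + c) \<partial>lborel) = (\<integral>\<^sup>+x. g x \<partial>lborel)"
proof -
  have "(\<integral>\<^sup>+x. g x \<partial>lborel) = (\<integral>\<^sup>+x. g x \<partial>(distr lborel borel ((+) c)))"
    by (simp add: lborel_distr_plus)
  also have "\<dots> = (\<integral>\<^sup>+x. g (c + x) \<partial>lborel)"
    by (rule nn_integral_distr) (use assms in auto)
  finally show ?thesis by (simp add: add.commute)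
qed

lemma int_transl:
  fixes g :: "real^'n \<Rightarrow> real"
  assumes "g \<in> borel_measurable borel"
  shows "(\<integral>x. g (x + c) \<partial>lborel) = (\<integral>x. g x \<partial>lborel)"
proof -
  have "(\<integral>x. g x \<partial>lborel) = (\<integral>x. g x \<partial>(distr lborel borel ((+) c)))"
    by (simp add: lborel_distr_plus)
  also have "\<dots> = (\<integral>x. g (c + x) \<partial>lborel)"
    by (rule integral_distr) (use assms in auto)
  finally show ?thesis by (simp add: add.commute)
qed

lemma integrable_transl:
  fixes g :: "real^'n \<Rightarrow> real"
  assumes "g \<in> borel_measurable borel" "integrable lborel g"
  shows "integrable lborel (\<lambda>x. g (x + c))"
proof -
  have "integrable (distr lborel borel ((+) c)) g"
    using assms by (simp add: lborel_distr_plus)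
  then have "integrable lborel (\<lambda>x. g (c + x))"
    by (subst (asm) integrable_distr_eq) (use assms in auto)
  then show ?thesis by (simp add: add.commute)
qed

context gs2 begin

lemma gauss_cont: "continuous_on UNIV (gauss_density S)"
  unfolding gauss_eq by (intro continuous_intros Poly_cont[OF Poly_quad])

lemma ibp_core:
  assumes q: "Poly q"
  shows "(\<integral>x. (partial_deriv i q x - yv (matrix_inv S) i x * q x) * gauss_density S x \<partial>lborel) = 0"
proof -
  define e where "e = axis i (1::real)"
  define F where "F = (\<lambda>x. q x * gauss_density S x)"
  define G where "G = (\<lambda>x. (partial_deriv i q x - yv (matrix_inv S) i x * q x) * gauss_density S x)"
  have PG: "Poly (\<lambda>x. partial_deriv i q x - yv (matrix_inv S) i x * q x)"
    by (intro Poly_diff Pmult Poly_yv pd_deriv q)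
  have Gi: "integrable lborel G" unfolding G_def by (rule integrable_poly[OF PG])
  have Fi: "integrable lborel F" unfolding F_def by (rule integrable_poly[OF q])
  have Gc: "continuous_on UNIV G" unfolding G_def
    by (intro continuous_intros Poly_cont[OF PG] gauss_cont)
  have Fc: "continuous_on UNIV F" unfolding F_def
    by (intro continuous_intros Poly_cont[OF q] gauss_cont)
  have Gm[measurable]: "G \<in> borel_measurable borel" by (rule borel_measurable_continuous_onI[OF Gc])
  have Fm[measurable]: "F \<in> borel_measurable borel" by (rule borel_measurable_continuous_onI[OF Fc])
  have FTC: "(\<integral>s. indicator {0..1} s * G (x + s *\<^sub>R e) \<partial>lborel) = F (x + e) - F x" for x
  proof -
    have "(\<integral>s. indicator {0..1} s *\<^sub>R G (x + s *\<^sub>R e) \<partial>lborel) = F (x + 1 *\<^sub>R e) - F (x + 0 *\<^sub>R e)"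
    proof (rule integral_FTC_atLeastAtMost[where F = "\<lambda>s. F (x + s *\<^sub>R e)"])
      fix s :: real
      have "((\<lambda>s. F (x + s *\<^sub>R e)) has_real_derivative G (x + s *\<^sub>R e)) (at s)"
        unfolding F_def G_def e_def by (rule qphi_line_deriv[OF symP q])
      then show "((\<lambda>s. F (x + s *\<^sub>R e)) has_vector_derivative G (x + s *\<^sub>R e)) (at s within {0..1})"
        by (simp add: has_real_derivative_iff_has_vector_derivative has_vector_derivative_at_within)
    next
      show "continuous_on {0..1} (\<lambda>s. G (x + s *\<^sub>R e))"
        by (intro continuous_on_compose2[OF Gc] continuous_intros) auto
    qed simp
    then show ?thesis by simp
  qed
  define h where "h = (\<lambda>(x::real^'n, s::real). indicator {0..1} s * G (x + s *\<^sub>R e))"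
  have hm[measurable]: "h \<in> borel_measurable (lborel \<Otimes>\<^sub>M lborel)"
    unfolding h_def by measurable
  have NG: "(\<integral>\<^sup>+x. ennreal (norm (G x)) \<partial>lborel) < \<infinity>"
    using Gi by (simp add: integrable_iff_bounded)
  have "(\<integral>\<^sup>+p. ennreal (norm (h p)) \<partial>(lborel \<Otimes>\<^sub>M lborel)) =
        (\<integral>\<^sup>+s. (\<integral>\<^sup>+x. ennreal (norm (h (x, s))) \<partial>lborel) \<partial>lborel)"
    by (rule lborel_pair.nn_integral_snd[symmetric]) measurable
  also have "\<dots> = (\<integral>\<^sup>+s. indicator {0..1} s * (\<integral>\<^sup>+x. ennreal (norm (G (x + s *\<^sub>R e))) \<partial>lborel) \<partial>lborel)"
    by (intro nn_integral_cong) (auto simp: h_def indicator_def nn_integral_cmult[symmetric] intro!: nn_integral_cong)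
  also have "\<dots> = (\<integral>\<^sup>+(s::real). indicator {0..1} s * (\<integral>\<^sup>+x. ennreal (norm (G x)) \<partial>lborel) \<partial>lborel)"
  proof -
    have tr: "(\<integral>\<^sup>+x. ennreal (norm (G (x + s *\<^sub>R e))) \<partial>lborel) = (\<integral>\<^sup>+x. ennreal (norm (G x)) \<partial>lborel)" for s
      by (rule nn_transl) measurable
    show ?thesis by (rule nn_integral_cong, subst tr, rule refl)
  qed
  also have "\<dots> = (\<integral>\<^sup>+x. ennreal (norm (G x)) \<partial>lborel)"
    by (subst mult.commute, subst nn_integral_cmult_indicator) auto
  finally have hfin: "(\<integral>\<^sup>+p. ennreal (norm (h p)) \<partial>(lborel \<Otimes>\<^sub>M lborel)) < \<infinity>" using NG by simp
  have hi: "integrable (lborel \<Otimes>\<^sub>M lborel) h"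
    using hfin hm by (simp add: integrable_iff_bounded)
  have hi': "integrable (lborel \<Otimes>\<^sub>M lborel) (case_prod (\<lambda>x s. indicator {0..1} s * G (x + s *\<^sub>R e)))"
    using hi by (simp add: h_def)
  have "(\<integral>s. (\<integral>x. indicator {0..1} s * G (x + s *\<^sub>R e) \<partial>lborel) \<partial>lborel) =
        (\<integral>x. (\<integral>s. indicator {0..1} s * G (x + s *\<^sub>R e) \<partial>lborel) \<partial>lborel)"
    by (rule lborel_pair.Fubini_integral[OF hi'])
  also have "\<dots> = (\<integral>x. F (x + e) - F x \<partial>lborel)"
    by (simp add: FTC)
  also have "\<dots> = (\<integral>x. F (x + e) \<partial>lborel) - (\<integral>x. F x \<partial>lborel)"
    by (rule Bochner_Integration.integral_diff[OF integrable_transl[OF Fm Fi] Fi])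
  also have "\<dots> = 0" by (simp add: int_transl)
  finally have L: "(\<integral>s. (\<integral>x. indicator {0..1} s * G (x + s *\<^sub>R e) \<partial>lborel) \<partial>lborel) = 0" .
  have "(\<integral>s. (\<integral>x. indicator {0..1} s * G (x + s *\<^sub>R e) \<partial>lborel) \<partial>lborel) =
        (\<integral>(s::real). (\<integral>x. G x \<partial>lborel) * indicator {0..1} s \<partial>lborel)"
    by (intro Bochner_Integration.integral_cong refl) (simp add: int_transl)
  also have "\<dots> = (\<integral>x. G x \<partial>lborel)"
    by (simp add: integral_indicator measure_lborel_Icc)
  finally show ?thesis using L unfolding G_def by simp
qed

end


context gs2 begin

lemma herm_meas: "hermite j S \<in> borel_measurable borel"
  by (rule Poly_meas[OF Poly_herm])

lemma integrable_HH: "integrable lborel (\<lambda>x. gauss_density S x * (hermite j S x * hermite k S x))"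
proof -
  have "integrable lborel (\<lambda>x. (hermite j S x * hermite k S x) * gauss_density S x)"
    by (intro integrable_poly Pmult Poly_herm)
  then show ?thesis by (simp add: mult.commute)
qed

lemma En_rec:
  assumes ji: "0 < j i"
  shows "(\<integral>x. gauss_density S x * (hermite j S x * hermite k S x) \<partial>lborel) =
    (\<Sum>l\<in>UNIV. matrix_inv S $ i $ l * real (k l) *
       (\<integral>x. gauss_density S x * (hermite (j(i := j i - 1)) S x * hermite (k(l := k l - 1)) S x) \<partial>lborel))"
proof -
  let ?P = "matrix_inv S"
  define H' where "H' = hermite (j(i := j i - 1)) S"
  define K where "K = hermite k S"
  have HP: "Poly H'" "Poly K" unfolding H'_def K_def by (rule Poly_herm)+
  have HJ: "hermite j S = RR ?P i H'" unfolding H'_def by (rule herm_rec[of j i, OF ji])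
  define Q where "Q = (\<lambda>x. H' x * K x)"
  have QP: "Poly Q" unfolding Q_def by (intro Pmult HP)
  have pdQ: "partial_deriv i Q = (\<lambda>x. partial_deriv i H' x * K x + H' x * partial_deriv i K x)"
    unfolding Q_def by (rule pd_mult[OF HP])
  have core: "(\<integral>x. (partial_deriv i Q x - yv ?P i x * Q x) * gauss_density S x \<partial>lborel) = 0"
    by (rule ibp_core[OF QP])
  have A: "integrable lborel (\<lambda>x. gauss_density S x * (H' x * partial_deriv i K x))"
  proof -
    have "integrable lborel (\<lambda>x. (H' x * partial_deriv i K x) * gauss_density S x)"
      by (intro integrable_poly Pmult HP pd_deriv)
    then show ?thesis by (simp add: mult.commute)
  qed
  have B: "integrable lborel (\<lambda>x. (partial_deriv i Q x - yv ?P i x * Q x) * gauss_density S x)"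
    by (intro integrable_poly Poly_diff Pmult Poly_yv pd_deriv QP)
  have eq: "gauss_density S x * (hermite j S x * hermite k S x) =
     gauss_density S x * (H' x * partial_deriv i K x) - (partial_deriv i Q x - yv ?P i x * Q x) * gauss_density S x" for x
    unfolding HJ RR_def pdQ unfolding Q_def K_def by (simp add: algebra_simps)
  have "(\<integral>x. gauss_density S x * (hermite j S x * hermite k S x) \<partial>lborel) =
     (\<integral>x. gauss_density S x * (H' x * partial_deriv i K x) \<partial>lborel)"
    unfolding eq Bochner_Integration.integral_diff[OF A B] core by simp
  also have "\<dots> = (\<integral>x. (\<Sum>l\<in>UNIV. matrix_inv S $ i $ l * real (k l) *
       (gauss_density S x * (H' x * hermite (k(l := k l - 1)) S x))) \<partial>lborel)"
    unfolding K_def appell by (simp add: sum_distrib_left algebra_simps)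
  also have "\<dots> = (\<Sum>l\<in>UNIV. (\<integral>x. matrix_inv S $ i $ l * real (k l) *
       (gauss_density S x * (H' x * hermite (k(l := k l - 1)) S x)) \<partial>lborel))"
    by (rule Bochner_Integration.integral_sum) (intro integrable_mult_right, unfold H'_def, rule integrable_HH)
  also have "\<dots> = (\<Sum>l\<in>UNIV. matrix_inv S $ i $ l * real (k l) *
       (\<integral>x. gauss_density S x * (H' x * hermite (k(l := k l - 1)) S x) \<partial>lborel))"
    by simp
  finally show ?thesis unfolding H'_def .
qed

end

definition CC :: "real^'n^'n \<Rightarrow> ('n::finite \<Rightarrow> nat) \<Rightarrow> ('n \<Rightarrow> nat) \<Rightarrow> real" where
  "CC P j k = (\<Sum>\<theta>\<in>index_mats j k. mat_pow P \<theta> / mat_fact \<theta>)"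

lemma finite_index_mats: fixes j k :: "'n::finite \<Rightarrow> nat" shows "finite (index_mats j k)"
proof (rule finite_subset)
  show "index_mats j k \<subseteq> PiE UNIV (\<lambda>p. PiE (UNIV::'n set) (\<lambda>q. {..j p}))"
  proof
    fix \<theta> assume t: "\<theta> \<in> index_mats j k"
    have "\<theta> p q \<le> j p" for p q
    proof -
      have "\<theta> p q \<le> (\<Sum>q\<in>UNIV. \<theta> p q)" by (rule member_le_sum) auto
      then show ?thesis using t by (simp add: index_mats_def)
    qed
    then show "\<theta> \<in> PiE UNIV (\<lambda>p. PiE (UNIV::'n set) (\<lambda>q. {..j p}))" by (auto simp: PiE_UNIV_domain)
  qed
  show "finite (PiE UNIV (\<lambda>p. PiE (UNIV::'n set) (\<lambda>q. {..j p})))"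
    by (intro finite_PiE) (auto simp: finite_class.finite_UNIV)
qed

lemma prod2_split:
  fixes H :: "'n::finite \<Rightarrow> 'n \<Rightarrow> real"
  shows "(\<Prod>p\<in>UNIV. \<Prod>q\<in>UNIV. H p q) = H i l * (\<Prod>x\<in>UNIV - {(i,l)}. H (fst x) (snd x))"
proof -
  have "(\<Prod>p\<in>UNIV. \<Prod>q\<in>UNIV. H p q) = (\<Prod>x\<in>UNIV \<times> UNIV. H (fst x) (snd x))"
    by (subst prod.cartesian_product) (simp add: case_prod_beta')
  also have "\<dots> = H i l * (\<Prod>x\<in>UNIV - {(i,l)}. H (fst x) (snd x))"
    by (subst prod.remove[of "UNIV \<times> UNIV" "(i,l)"]) (simp_all add: finite_class.finite_UNIV)
  finally show ?thesis .
qed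

definition bump :: "'n \<Rightarrow> 'n \<Rightarrow> ('n \<Rightarrow> 'n \<Rightarrow> nat) \<Rightarrow> 'n \<Rightarrow> 'n \<Rightarrow> nat" where
  "bump i l \<theta> = (\<lambda>p q. \<theta> p q + (if p = i \<and> q = l then 1 else 0))"

lemma prod2_bump:
  fixes G :: "'n::finite \<Rightarrow> 'n \<Rightarrow> nat \<Rightarrow> real" and i l :: 'n and \<theta> :: "'n \<Rightarrow> 'n \<Rightarrow> nat"
  defines "R \<equiv> (\<Prod>x\<in>UNIV - {(i,l)}. G (fst x) (snd x) (\<theta> (fst x) (snd x)))"
  shows "(\<Prod>p\<in>UNIV. \<Prod>q\<in>UNIV. G p q (bump i l \<theta> p q)) = G i l (Suc (\<theta> i l)) * R"
    and "(\<Prod>p\<in>UNIV. \<Prod>q\<in>UNIV. G p q (\<theta> p q)) = G i l (\<theta> i l) * R"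
proof -
  have "(\<Prod>p\<in>UNIV. \<Prod>q\<in>UNIV. G p q (bump i l \<theta> p q)) =
     G i l (bump i l \<theta> i l) * (\<Prod>x\<in>UNIV - {(i,l)}. G (fst x) (snd x) (bump i l \<theta> (fst x) (snd x)))"
    by (rule prod2_split)
  also have "(\<Prod>x\<in>UNIV - {(i,l)}. G (fst x) (snd x) (bump i l \<theta> (fst x) (snd x))) = R"
    unfolding R_def by (intro prod.cong refl) (auto simp: bump_def)
  finally show "(\<Prod>p\<in>UNIV. \<Prod>q\<in>UNIV. G p q (bump i l \<theta> p q)) = G i l (Suc (\<theta> i l)) * R"
    by (simp add: bump_def)
  show "(\<Prod>p\<in>UNIV. \<Prod>q\<in>UNIV. G p q (\<theta> p q)) = G i l (\<theta> i l) * R"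
    unfolding R_def by (rule prod2_split)
qed

lemma mat_pow_bump: "mat_pow P (bump i l \<theta>) = P$i$l * mat_pow P \<theta>"
  unfolding mat_pow_def
  using prod2_bump[where G="\<lambda>p q n. (P$p$q)^n" and i=i and l=l and \<theta>=\<theta>] by simp

lemma mat_fact_bump: "mat_fact (bump i l \<theta>) = real (Suc (\<theta> i l)) * mat_fact \<theta>"
  unfolding mat_fact_def
  using prod2_bump[where G="\<lambda>p q n. fact n" and i=i and l=l and \<theta>=\<theta>] by (simp add: fact_Suc)

lemma mat_fact_pos: "0 < mat_fact \<theta>"
  unfolding mat_fact_def by (intro prod_pos) auto

lemma row_bump: "(\<Sum>q\<in>UNIV. bump i l (\<theta>::'n::finite \<Rightarrow> 'n \<Rightarrow> nat) p q) = (\<Sum>q\<in>UNIV. \<theta> p q) + (if p = i then 1 else 0)"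
  by (cases "p = i") (simp_all add: bump_def sum.distrib)

lemma col_bump: "(\<Sum>p\<in>UNIV. bump i l (\<theta>::'n::finite \<Rightarrow> 'n \<Rightarrow> nat) p q) = (\<Sum>p\<in>UNIV. \<theta> p q) + (if q = l then 1 else 0)"
  by (cases "q = l") (simp_all add: bump_def sum.distrib)

lemma index_mats_bump:
  assumes ji: "0 < j i" and kl: "0 < k l"
  shows "{\<theta>\<in>index_mats j k. 0 < \<theta> i l} = bump i l ` index_mats (j(i := j i - 1)) (k(l := k l - 1))"
proof
  show "bump i l ` index_mats (j(i := j i - 1)) (k(l := k l - 1)) \<subseteq> {\<theta>\<in>index_mats j k. 0 < \<theta> i l}"
    using ji kl by (auto simp: index_mats_def row_bump col_bump) (auto simp: bump_def)
next
  show "{\<theta>\<in>index_mats j k. 0 < \<theta> i l} \<subseteq> bump i l ` index_mats (j(i := j i - 1)) (k(l := k l - 1))"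
  proof
    fix \<theta> assume t: "\<theta> \<in> {\<theta>\<in>index_mats j k. 0 < \<theta> i l}"
    define u where "u = (\<lambda>p q. \<theta> p q - (if p = i \<and> q = l then 1 else 0))"
    have tu: "\<theta> = bump i l u" using t by (auto simp: u_def bump_def fun_eq_iff)
    have "u \<in> index_mats (j(i := j i - 1)) (k(l := k l - 1))"
    proof -
      have r: "(\<Sum>q\<in>UNIV. u p q) + (if p = i then 1 else 0) = j p" for p
        using t row_bump[of i l u p] tu by (simp add: index_mats_def)
      have c: "(\<Sum>p\<in>UNIV. u p q) + (if q = l then 1 else 0) = k q" for q
        using t col_bump[of i l u q] tu by (simp add: index_mats_def)
      show ?thesis unfolding index_mats_def
      proof (intro CollectI conjI allI)
        fix p show "(\<Sum>q\<in>UNIV. u p q) = (j(i := j i - 1)) p" using r[of p] by (cases "p = i") auto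
      next
        fix q show "(\<Sum>p\<in>UNIV. u p q) = (k(l := k l - 1)) q" using c[of q] by (cases "q = l") auto
      qed
    qed
    then show "\<theta> \<in> bump i l ` index_mats (j(i := j i - 1)) (k(l := k l - 1))" using tu by blast
  qed
qed

lemma inj_bump: "inj (bump i l)"
  by (rule injI) (auto simp: bump_def fun_eq_iff)

lemma CC_rec:
  fixes P :: "real^'n::finite^'n"
  assumes ji: "0 < j i"
  shows "real (j i) * CC P j k =
    (\<Sum>l\<in>UNIV. P$i$l * (if 0 < k l then CC P (j(i := j i - 1)) (k(l := k l - 1)) else 0))"
proof -
  let ?f = "\<lambda>\<theta>. mat_pow P \<theta> / mat_fact \<theta>"
  have Sl: "(\<Sum>\<theta>\<in>index_mats j k. real (\<theta> i l) * ?f \<theta>) =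
      P$i$l * (if 0 < k l then CC P (j(i := j i - 1)) (k(l := k l - 1)) else 0)" for l
  proof (cases "0 < k l")
    case False
    have z: "\<theta> i l = 0" if "\<theta> \<in> index_mats j k" for \<theta>
    proof -
      have "\<theta> i l \<le> (\<Sum>p\<in>UNIV. \<theta> p l)" by (rule member_le_sum) auto
      then show ?thesis using that False by (simp add: index_mats_def)
    qed
    have "(\<Sum>\<theta>\<in>index_mats j k. real (\<theta> i l) * ?f \<theta>) = 0"
      by (rule sum.neutral) (simp add: z)
    then show ?thesis using False by simp
  next
    case True
    have "(\<Sum>\<theta>\<in>index_mats j k. real (\<theta> i l) * ?f \<theta>) =
          (\<Sum>\<theta>\<in>{\<theta>\<in>index_mats j k. 0 < \<theta> i l}. real (\<theta> i l) * ?f \<theta>)"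
      by (rule sum.mono_neutral_right) (auto simp: finite_index_mats)
    also have "\<dots> = (\<Sum>\<theta>\<in>index_mats (j(i := j i - 1)) (k(l := k l - 1)). real (bump i l \<theta> i l) * ?f (bump i l \<theta>))"
      unfolding index_mats_bump[where j=j and i=i and k=k and l=l, OF ji True]
      by (subst sum.reindex) (auto intro: inj_on_subset[OF inj_bump])
    also have "\<dots> = (\<Sum>\<theta>\<in>index_mats (j(i := j i - 1)) (k(l := k l - 1)). P$i$l * ?f \<theta>)"
    proof (intro sum.cong refl)
      fix \<theta> :: "'n \<Rightarrow> 'n \<Rightarrow> nat"
      have key: "\<And>a b c::real. a \<noteq> 0 \<Longrightarrow> a * (b / (a * c)) = b / c" by simp
      have bil: "bump i l \<theta> i l = Suc (\<theta> i l)" by (simp add: bump_def)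
      show "real (bump i l \<theta> i l) * ?f (bump i l \<theta>) = P$i$l * ?f \<theta>"
        unfolding mat_pow_bump mat_fact_bump bil by (subst key) simp_all
    qed
    also have "\<dots> = P$i$l * (if 0 < k l then CC P (j(i := j i - 1)) (k(l := k l - 1)) else 0)"
      using True by (simp add: CC_def sum_distrib_left)
    finally show ?thesis .
  qed
  have "real (j i) * CC P j k = (\<Sum>\<theta>\<in>index_mats j k. real (j i) * ?f \<theta>)"
    by (simp add: CC_def sum_distrib_left)
  also have "\<dots> = (\<Sum>\<theta>\<in>index_mats j k. \<Sum>l\<in>UNIV. real (\<theta> i l) * ?f \<theta>)"
  proof (intro sum.cong refl)
    fix \<theta> assume "\<theta> \<in> index_mats j k"
    then have "j i = (\<Sum>l\<in>UNIV. \<theta> i l)" by (simp add: index_mats_def)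
    then show "real (j i) * ?f \<theta> = (\<Sum>l\<in>UNIV. real (\<theta> i l) * ?f \<theta>)"
      by (simp only: of_nat_sum sum_distrib_right)
  qed
  also have "\<dots> = (\<Sum>l\<in>UNIV. \<Sum>\<theta>\<in>index_mats j k. real (\<theta> i l) * ?f \<theta>)"
    by (rule sum.swap)
  also have "\<dots> = (\<Sum>l\<in>UNIV. P$i$l * (if 0 < k l then CC P (j(i := j i - 1)) (k(l := k l - 1)) else 0))"
    by (simp only: Sl)
  finally show ?thesis .
qed

lemma mi_fact_dec:
  assumes "0 < k l"
  shows "mi_fact k = real (k l) * mi_fact (k(l := k l - 1))"
proof -
  have a: "mi_fact k = fact (k l) * (\<Prod>p\<in>UNIV - {l}. fact (k p))"
    unfolding mi_fact_def by (subst prod.remove[of _ l]) auto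
  have b: "mi_fact (k(l := k l - 1)) = fact (k l - 1) * (\<Prod>p\<in>UNIV - {l}. fact (k p))"
    unfolding mi_fact_def by (subst prod.remove[of _ l]) (auto intro!: prod.cong)
  have "fact (k l) = (real (k l) * fact (k l - 1) :: real)"
    using assms by (metis fact_reduce of_nat_fact)
  then show ?thesis unfolding a b by simp
qed

lemma CC_zero_diff:
  assumes "mi_abs j \<noteq> mi_abs k"
  shows "CC P j k = 0"
proof -
  have "index_mats j k = {}"
  proof (rule ccontr)
    assume "index_mats j k \<noteq> {}"
    then obtain \<theta> where t: "\<theta> \<in> index_mats j k" by blast
    have "mi_abs j = (\<Sum>p\<in>UNIV. \<Sum>q\<in>UNIV. \<theta> p q)" using t by (simp add: index_mats_def mi_abs_def)
    also have "\<dots> = (\<Sum>q\<in>UNIV. \<Sum>p\<in>UNIV. \<theta> p q)" by (rule sum.swap)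
    also have "\<dots> = mi_abs k" using t by (simp add: index_mats_def mi_abs_def)
    finally show False using assms by simp
  qed
  then show ?thesis by (simp add: CC_def)
qed

lemma index_mats_00: "index_mats (\<lambda>_. 0) (\<lambda>_. 0) = {(\<lambda>_ _. 0::nat)}"
  by (auto simp: index_mats_def fun_eq_iff)

lemma CC_00: "CC P (\<lambda>_. 0) (\<lambda>_. 0) = 1"
  by (simp add: CC_def index_mats_00 mat_pow_def mat_fact_def)

lemma mi_fact_0: "mi_fact (\<lambda>_. 0) = 1"
  by (simp add: mi_fact_def)

locale gs3 = gs2 S for S :: "real^'n::finite^'n" +
  assumes int1: "(\<integral>x. gauss_density S x \<partial>lborel) = 1"
begin

lemma En_formula:
  "(\<integral>x. gauss_density S x * (hermite j S x * hermite k S x) \<partial>lborel) =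
     mi_fact j * mi_fact k * CC (matrix_inv S) j k"
proof (induction "mi_abs j" arbitrary: j k rule: less_induct)
  case less
  let ?P = "matrix_inv S"
  show ?case
  proof (cases "mi_abs j = 0")
    case True
    then have j0: "j = (\<lambda>_. 0)" by (simp add: mi_abs_zero)
    show ?thesis
    proof (cases "mi_abs k = 0")
      case True
      then have k0: "k = (\<lambda>_. 0)" by (simp add: mi_abs_zero)
      show ?thesis unfolding j0 k0 herm0 using int1 by (simp add: CC_00 mi_fact_0)
    next
      case False
      then obtain l where kl: "0 < k l" using mi_abs_pos by blast
      have "(\<integral>x. gauss_density S x * (hermite j S x * hermite k S x) \<partial>lborel) =
            (\<integral>x. gauss_density S x * (hermite k S x * hermite j S x) \<partial>lborel)"
        by (simp add: mult.commute)
      also have "\<dots> = 0" unfolding En_rec[of k l, OF kl] by (simp add: j0)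
      finally show ?thesis using CC_zero_diff[of j k ?P] False True by simp
    qed
  next
    case False
    then obtain i where ji: "0 < j i" using mi_abs_pos by blast
    define j' where "j' = j(i := j i - 1)"
    have lt: "mi_abs j' < mi_abs j" unfolding j'_def using mi_abs_dec[of j i, OF ji] False by simp
    have "(\<integral>x. gauss_density S x * (hermite j S x * hermite k S x) \<partial>lborel) =
      (\<Sum>l\<in>UNIV. ?P $ i $ l * real (k l) * (mi_fact j' * mi_fact (k(l := k l - 1)) * CC ?P j' (k(l := k l - 1))))"
      unfolding En_rec[of j i, OF ji] j'_def[symmetric] less.hyps[OF lt] ..
    also have "\<dots> = (\<Sum>l\<in>UNIV. mi_fact j' * mi_fact k * (?P $ i $ l * (if 0 < k l then CC ?P j' (k(l := k l - 1)) else 0)))"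
    proof (intro sum.cong refl)
      fix l
      show "?P $ i $ l * real (k l) * (mi_fact j' * mi_fact (k(l := k l - 1)) * CC ?P j' (k(l := k l - 1))) =
        mi_fact j' * mi_fact k * (?P $ i $ l * (if 0 < k l then CC ?P j' (k(l := k l - 1)) else 0))"
        by (cases "0 < k l") (simp_all add: mi_fact_dec[of k l])
    qed
    also have "\<dots> = mi_fact j' * mi_fact k * (real (j i) * CC ?P j k)"
      unfolding CC_rec[of j i, OF ji] j'_def by (simp add: sum_distrib_left)
    also have "\<dots> = mi_fact j * mi_fact k * CC ?P j k"
      using mi_fact_dec[of j i, OF ji] unfolding j'_def by simp
    finally show ?thesis .
  qed
qed

end


theorem proposition8:
  fixes M :: "'a measure" and X :: "'a \<Rightarrow> real^'n" and S :: "real^'n^'n"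
  assumes "prob_space M"
    and "sym_posdef S"
    and "distributed M lborel X (\<lambda>x. ennreal (gauss_density S x))"
  shows "(\<forall>j k. (\<integral>\<omega>. hermite j S (X \<omega>) * hermite k S (X \<omega>) \<partial>M) =
            (if mi_abs j = mi_abs k
             then mi_fact j * mi_fact k *
                  (\<Sum>\<theta>\<in>index_mats j k. mat_pow (matrix_inv S) \<theta> / mat_fact \<theta>)
             else 0))
       \<and> (\<forall>j. (\<integral>\<omega>. (hermite j S (X \<omega>))\<^sup>2 \<partial>M) =
            (mi_fact j)\<^sup>2 * (\<Sum>\<theta>\<in>index_mats j j. mat_pow (matrix_inv S) \<theta> / mat_fact \<theta>))"
proof -
  note PS = assms(1) and dist = assms(3)
  let ?P = "matrix_inv S"
  have symS: "transpose S = S" and pos: "\<And>x. x \<noteq> 0 \<Longrightarrow> 0 < x \<bullet> (S *v x)"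
    using assms(2) by (auto simp: sym_posdef_def)
  have ker: "\<forall>x. S *v x = 0 \<longrightarrow> x = 0"
  proof (intro allI impI)
    fix x assume "S *v x = 0"
    then show "x = 0" using pos[of x] by (cases "x = 0") auto
  qed
  then obtain B where B: "B ** S = mat 1" using matrix_left_invertible_ker by blast
  then have B2: "S ** B = mat 1" using matrix_left_right_inverse by blast
  have "\<exists>A'. S ** A' = mat 1 \<and> A' ** S = mat 1" using B B2 by blast
  then have SP: "S ** ?P = mat 1" "?P ** S = mat 1"
    unfolding matrix_inv_def by (metis (mono_tags, lifting) someI_ex)+
  have inv: "invertible S" unfolding invertible_def using B B2 by blast
  have symP: "transpose ?P = ?P"
  proof -
    have "transpose ?P ** S = mat 1"
      using arg_cong[OF SP(1), of transpose] by (simp add: matrix_transpose_mul symS)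
    then have "transpose ?P = transpose ?P ** (S ** ?P)" by (simp add: SP matrix_mul_rid)
    also have "\<dots> = (transpose ?P ** S) ** ?P" by (simp add: matrix_mul_assoc)
    also have "\<dots> = ?P" using \<open>transpose ?P ** S = mat 1\<close> by (simp add: matrix_mul_lid)
    finally show ?thesis .
  qed
  have detS: "det S \<noteq> 0" using inv invertible_det_nz by blast
  have gcpos: "0 < gc S" unfolding gc_def using detS by simp
  have gc0: "gc S \<noteq> 0" using gcpos by simp
  have gnn: "0 \<le> gauss_density S x" for x using gcpos by (simp add: gauss_eq)
  have pdP: "0 < quad ?P x" if x: "x \<noteq> 0" for x
  proof -
    define y where "y = ?P *v x"
    have Sy: "S *v y = x" unfolding y_def by (simp add: matrix_vector_mul_assoc SP)
    have "y \<noteq> 0" using Sy x by auto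
    then have "0 < y \<bullet> (S *v y)" by (rule pos)
    moreover have "quad ?P x = (S *v y) \<bullet> y" unfolding quad_def y_def[symmetric] using Sy by simp
    ultimately show ?thesis by (simp add: inner_commute)
  qed
  interpret prob_space M by (rule PS)
  have intg: "integrable lborel (gauss_density S)"
  proof -
    have "integrable lborel (\<lambda>x. gauss_density S x * 1) \<longleftrightarrow> integrable M (\<lambda>x. 1::real)"
      by (rule distributed_integrable[OF dist]) (auto simp: gnn)
    then show ?thesis by simp
  qed
  have int1: "(\<integral>x. gauss_density S x \<partial>lborel) = 1"
  proof -
    have "(\<integral>x. gauss_density S x * 1 \<partial>lborel) = (\<integral>x. 1 \<partial>M)"
      by (rule distributed_integral[OF dist]) (auto simp: gnn)
    then show ?thesis by (simp add: prob_space)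
  qed
  interpret g: gs3 S
    by unfold_locales (use symP gc0 pdP intg int1 in auto)
  have E: "(\<integral>\<omega>. hermite j S (X \<omega>) * hermite k S (X \<omega>) \<partial>M) = mi_fact j * mi_fact k * CC ?P j k" for j k
  proof -
    have "(\<integral>\<omega>. hermite j S (X \<omega>) * hermite k S (X \<omega>) \<partial>M) =
          (\<integral>x. gauss_density S x * (hermite j S x * hermite k S x) \<partial>lborel)"
      by (rule distributed_integral[OF dist, symmetric])
         (auto simp: gnn intro: borel_measurable_times g.herm_meas)
    also have "\<dots> = mi_fact j * mi_fact k * CC ?P j k" by (rule g.En_formula)
    finally show ?thesis .
  qed
  show ?thesis
  proof (intro conjI allI)
    fix j k :: "'n \<Rightarrow> nat"
    show "(\<integral>\<omega>. hermite j S (X \<omega>) * hermite k S (X \<omega>) \<partial>M) =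
            (if mi_abs j = mi_abs k
             then mi_fact j * mi_fact k *
                  (\<Sum>\<theta>\<in>index_mats j k. mat_pow (matrix_inv S) \<theta> / mat_fact \<theta>)
             else 0)"
      using E[of j k] CC_zero_diff[of j k ?P] by (auto simp: CC_def)
  next
    fix j :: "'n \<Rightarrow> nat"
    show "(\<integral>\<omega>. (hermite j S (X \<omega>))\<^sup>2 \<partial>M) =
            (mi_fact j)\<^sup>2 * (\<Sum>\<theta>\<in>index_mats j j. mat_pow (matrix_inv S) \<theta> / mat_fact \<theta>)"
      using E[of j j] by (simp add: power2_eq_square CC_def)
  qed
qed


end
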